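(* Let $1\le k\le n$ and $S\in\{n\ k\}$. The restriction of $\mathsf{Rot}_S$ to the boundary $[0,\pi]^{Z_S}\setminus(0,\pi)^{Z_S}$ takes values in $\bigcup_{T<S}\mathsf{Gr}_k(n)_T$.
   Context: $\mathsf{Gr}_k(n)$ is the real Grassmannian of $k$-dimensional subspaces of $\mathbb{R}^n$, with the quotient topology from the map $\mathsf{col}$ sending an injective $n\times k$ matrix to its column space. $\{n\ k\}$ is the set of $k$-element subsets $S=\{s_1<\cdots<s_k\}$ of $\{1,\dots,n\}$, partially ordered by $S\le T$ iff $s_i\le t_i$ for all $i$. For $S$, let $\mathbb{R}^S=\mathrm{span}\{e_i: i\in S\}$, and $U_S$ the set of $V\in\mathsf{Gr}_k(n)$ whose orthogonal projection to $\mathbb{R}^S$ is an isomorphism. The Schubert cell is $\mathsf{Gr}_k(n)_S:=\{V\mid S \text{ is the maximum of }\{T: V\in U_T\}\}$. Let $Z_S:=\{(i,j)\mid 1\le i\le k,\ i\le j\le s_i-1\}$, totally ordered by $(i,j)\le(i',j')$ iff $i<i'$, or $i=i'$ and $j\ge j'$. $\mathsf{R}_j(\theta)\in O(n)$ is the rotation by $\theta$ in the oriented $(e_j,e_{j+1})$-plane. $\mathsf{Rot}_S:[0,\pi]^{Z_S}\to\mathsf{Gr}_k(n)$ is $(\theta_{(i,j)})\mapsto \mathsf{col}\bigl((\prod_{(i,j)\in Z_S}\mathsf{R}_j(\theta_{(i,j)}))\,\mathbb{1}_{n\times k}\bigr)$, product from left to right in increasing order of $Z_S$, $\mathbb{1}_{n\times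 k}$ the first $k$ columns of the identity. *)

theory Defs
  imports Jordan_Normal_Form.Matrix
begin

(* Matrix/vector indices are 0-based; row/coordinate index r corresponds to the
   standard basis vector e_(r+1).  Subsets S of {1..n} are 1-based as in the paper. *)

definition col :: "real mat \<Rightarrow> real vec set" where
  "col A = {A *\<^sub>v x | x. x \<in> carrier_vec (dim_col A)}"

definition Gr :: "nat \<Rightarrow> nat \<Rightarrow> real vec set set" where
  "Gr k n = {col A | A. A \<in> carrier_mat n k \<and> inj_on (\<lambda>x. A *\<^sub>v x) (carrier_vec k)}"

definition subsets_nk :: "nat \<Rightarrow> nat \<Rightarrow> nat set set" where
  "subsets_nk n k = {S. S \<subseteq> {1..n} \<and> card S = k}"

(* i-th smallest element s_i of S (1-based i) *)
definition elt :: "nat set \<Rightarrow> nat \<Rightarrow> nat" where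
  "elt S i = sorted_list_of_set S ! (i - 1)"

definition gale_le :: "nat \<Rightarrow> nat set \<Rightarrow> nat set \<Rightarrow> bool" where
  "gale_le k S T \<longleftrightarrow> (\<forall>i\<in>{1..k}. elt S i \<le> elt T i)"

definition gale_less :: "nat \<Rightarrow> nat set \<Rightarrow> nat set \<Rightarrow> bool" where
  "gale_less k S T \<longleftrightarrow> gale_le k S T \<and> S \<noteq> T"

definition coord_space :: "nat \<Rightarrow> nat set \<Rightarrow> real vec set" where
  "coord_space n S = {v \<in> carrier_vec n. \<forall>r<n. Suc r \<notin> S \<longrightarrow> v $ r = 0}"

definition proj :: "nat \<Rightarrow> nat set \<Rightarrow> real vec \<Rightarrow> real vec" where
  "proj n S v = vec n (\<lambda>r. if Suc r \<in> S then v $ r else 0)"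

(* U_S: subspaces whose orthogonal projection to R^S is an isomorphism
   (the projection is linear, so isomorphism = bijection V \<rightarrow> R^S) *)
definition U :: "nat \<Rightarrow> nat \<Rightarrow> nat set \<Rightarrow> real vec set set" where
  "U k n S = {V \<in> Gr k n. bij_betw (proj n S) V (coord_space n S)}"

definition schubert_cell :: "nat \<Rightarrow> nat \<Rightarrow> nat set \<Rightarrow> real vec set set" where
  "schubert_cell k n S = {V \<in> Gr k n.
      S \<in> subsets_nk n k \<and> V \<in> U k n S \<and>
      (\<forall>T \<in> subsets_nk n k. V \<in> U k n T \<longrightarrow> gale_le k T S)}"

(* Z_S as a list, in increasing order of the total order
   (i,j) \<le> (i',j') iff i < i', or i = i' and j \<ge> j' *)
definition Z_list :: "nat \<Rightarrow> nat set \<Rightarrow> (nat \<times> nat) list" where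
  "Z_list k S = concat (map (\<lambda>i. map (\<lambda>j. (i, j)) (rev [i..<elt S i])) [1..<Suc k])"

definition Z :: "nat \<Rightarrow> nat set \<Rightarrow> (nat \<times> nat) set" where
  "Z k S = {(i, j). 1 \<le> i \<and> i \<le> k \<and> i \<le> j \<and> j \<le> elt S i - 1}"

(* rotation by \<theta> in the oriented (e_j, e_(j+1))-plane of R^n (j 1-based):
   e_j \<mapsto> cos \<theta> e_j + sin \<theta> e_(j+1),  e_(j+1) \<mapsto> - sin \<theta> e_j + cos \<theta> e_(j+1) *)
definition Rj :: "nat \<Rightarrow> nat \<Rightarrow> real \<Rightarrow> real mat" where
  "Rj n j \<theta> = mat n n (\<lambda>(a, b).
      if Suc a = j \<and> Suc b = j then cos \<theta>
      else if Suc a = j + 1 \<and> Suc b = j + 1 then cos \<theta>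
      else if Suc a = j + 1 \<and> Suc b = j then sin \<theta>
      else if Suc a = j \<and> Suc b = j + 1 then - sin \<theta>
      else if a = b then 1 else 0)"

definition id_nk :: "nat \<Rightarrow> nat \<Rightarrow> real mat" where
  "id_nk n k = mat n k (\<lambda>(a, b). if a = b then 1 else 0)"

(* Rot_S(\<theta>) = col((\<Prod>_{(i,j) \<in> Z_S, increasing, left to right} R_j(\<theta>_(i,j))) 1_{n x k}) *)
definition Rot :: "nat \<Rightarrow> nat \<Rightarrow> nat set \<Rightarrow> (nat \<times> nat \<Rightarrow> real) \<Rightarrow> real vec set" where
  "Rot n k S \<theta> = col (foldr (\<lambda>(i, j) M. Rj n j (\<theta> (i, j)) * M) (Z_list k S) (1\<^sub>m n) * id_nk n k)"

end

theory Submission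
  imports Defs "HOL-Library.Function_Algebras"
begin

definition fsc :: "real \<Rightarrow> (nat \<Rightarrow> real) \<Rightarrow> (nat \<Rightarrow> real)" where
  "fsc c f = (\<lambda>i. c * f i)"

interpretation FV: vector_space fsc
  by unfold_locales (auto simp: fsc_def fun_eq_iff algebra_simps)

lemma fsum_apply: "(\<Sum>x\<in>A. (f x :: nat \<Rightarrow> real)) i = (\<Sum>x\<in>A. f x i)"
  by (induction A rule: infinite_finite_induct) auto

definition Eb :: "nat \<Rightarrow> (nat \<Rightarrow> real) set" where
  "Eb m = {f. \<forall>i\<ge>m. f i = 0}"

lemma FV_mhom: "(\<And>x y. h (x + y) = h x + h y) \<Longrightarrow> (\<And>c x. h (fsc c x) = fsc c (h x)) \<Longrightarrow> module_hom fsc fsc h"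
  by (simp add: module_hom_iff_linear Vector_Spaces.linear_iff FV.vector_space_axioms)

lemma subspace_Eb: "FV.subspace (Eb m)"
  by (auto simp: FV.subspace_def Eb_def fsc_def)

definition topset :: "(nat \<Rightarrow> real) set \<Rightarrow> nat set" where
  "topset W = {r. \<exists>f\<in>W. f r \<noteq> 0 \<and> (\<forall>i>r. f i = 0)}"

definition wv :: "(nat \<Rightarrow> real) set \<Rightarrow> nat \<Rightarrow> (nat \<Rightarrow> real)" where
  "wv W r = (SOME f. f \<in> W \<and> f r \<noteq> 0 \<and> (\<forall>i>r. f i = 0))"

lemma wv: "r \<in> topset W \<Longrightarrow> wv W r \<in> W \<and> wv W r r \<noteq> 0 \<and> (\<forall>i>r. wv W r i = 0)"
proof -
  assume "r \<in> topset W"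
  then have "\<exists>f. f \<in> W \<and> f r \<noteq> 0 \<and> (\<forall>i>r. f i = 0)" by (auto simp: topset_def)
  then show ?thesis unfolding wv_def by (rule someI_ex)
qed

lemma top_exists:
  assumes "f \<in> Eb n" "f \<noteq> 0"
  shows "\<exists>r<n. f r \<noteq> 0 \<and> (\<forall>i>r. f i = 0)"
proof -
  let ?A = "{i. f i \<noteq> 0}"
  have sub: "?A \<subseteq> {..<n}" using assms(1) by (auto simp: Eb_def not_less[symmetric])
  hence fin: "finite ?A" by (rule finite_subset) auto
  have ne: "?A \<noteq> {}" using assms(2) by auto
  define r where "r = Max ?A"
  have "r \<in> ?A" using fin ne r_def Max_in by blast
  moreover have "\<forall>i>r. f i = 0" using fin r_def Max_ge by (metis mem_Collect_eq not_le)
  ultimately show ?thesis using sub by auto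
qed

lemma topset_sub: "W \<subseteq> Eb n \<Longrightarrow> topset W \<subseteq> {..<n}"
  unfolding topset_def Eb_def by (force simp: not_less[symmetric])

lemma span_red:
  assumes W: "FV.subspace W" "W \<subseteq> Eb n"
  shows "f \<in> W \<Longrightarrow> f \<in> Eb m \<Longrightarrow> f \<in> FV.span (wv W ` {r\<in>topset W. r < m})"
proof (induction m arbitrary: f)
  case 0
  then have "f = 0" by (intro ext) (auto simp: Eb_def)
  then show ?case using FV.span_zero by blast
next
  case (Suc m)
  have mono: "FV.span (wv W ` {r\<in>topset W. r < m}) \<subseteq> FV.span (wv W ` {r\<in>topset W. r < Suc m})"
    by (rule FV.span_mono) auto
  show ?case
  proof (cases "f m = 0")
    case True
    then have "f \<in> Eb m" using Suc.prems by (auto simp: Eb_def) (metis Suc_leI le_neq_implies_less)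
    then show ?thesis using Suc mono by blast
  next
    case False
    have mt: "m \<in> topset W" unfolding topset_def using Suc.prems False
      by (auto simp: Eb_def)
    define w where "w = wv W m"
    have w: "w \<in> W" "w m \<noteq> 0" "\<forall>i>m. w i = 0" using wv[OF mt] w_def by auto
    define g where "g = f - fsc (f m / w m) w"
    have gW: "g \<in> W" unfolding g_def using W(1) Suc.prems w(1)
      by (intro FV.subspace_diff FV.subspace_scale) auto
    have gE: "g \<in> Eb m" unfolding Eb_def
    proof (intro CollectI allI impI)
      fix i assume "m \<le> i"
      then consider "i = m" | "i > m" by linarith
      then show "g i = 0"
      proof cases
        case 1 then show ?thesis using w by (simp add: g_def fsc_def)
      next
        case 2 then have "f i = 0" "w i = 0" using Suc.prems w by (auto simp: Eb_def)
        then show ?thesis by (simp add: g_def fsc_def)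
      qed
    qed
    have "g \<in> FV.span (wv W ` {r\<in>topset W. r < Suc m})" using Suc.IH[OF gW gE] mono by blast
    moreover have "w \<in> FV.span (wv W ` {r\<in>topset W. r < Suc m})"
      using mt w_def by (intro FV.span_base) auto
    ultimately have "g + fsc (f m / w m) w \<in> FV.span (wv W ` {r\<in>topset W. r < Suc m})"
      by (intro FV.span_add FV.span_scale)
    moreover have "g + fsc (f m / w m) w = f" unfolding g_def by simp
    ultimately show ?thesis by simp
  qed
qed

lemma wv_inj: "inj_on (wv W) (topset W)"
proof (rule inj_onI)
  fix r r' assume r: "r \<in> topset W" "r' \<in> topset W" "wv W r = wv W r'"
  show "r = r'"
  proof (rule ccontr)
    assume "r \<noteq> r'"
    then consider "r < r'" | "r' < r" by linarith
    then show False using wv[OF r(1)] wv[OF r(2)] r(3) by cases metis+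
  qed
qed

lemma wv_indep:
  assumes W: "FV.subspace W"
  shows "FV.independent (wv W ` {r\<in>topset W. r < m})"
proof (induction m)
  case 0 then show ?case by (simp add: FV.independent_empty)
next
  case (Suc m)
  show ?case
  proof (cases "m \<in> topset W")
    case False
    then have "{r\<in>topset W. r < Suc m} = {r\<in>topset W. r < m}" by (auto simp: less_Suc_eq)
    then show ?thesis using Suc by simp
  next
    case True
    then have eq: "{r\<in>topset W. r < Suc m} = insert m {r\<in>topset W. r < m}" by (auto simp: less_Suc_eq)
    have "FV.span (wv W ` {r\<in>topset W. r < m}) \<subseteq> Eb m"
    proof (rule FV.span_minimal)
      show "wv W ` {r \<in> topset W. r < m} \<subseteq> Eb m"
        using wv by (fastforce simp: Eb_def)
      show "FV.subspace (Eb m)" by (rule subspace_Eb)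
    qed
    moreover have "wv W m \<notin> Eb m" using wv[OF True] by (auto simp: Eb_def)
    ultimately have "wv W m \<notin> FV.span (wv W ` {r\<in>topset W. r < m})" by blast
    then show ?thesis unfolding eq image_insert using Suc by (rule FV.independent_insertI)
  qed
qed

lemma card_bound:
  assumes W: "FV.subspace W" "W \<subseteq> Eb n"
    and I: "FV.independent I" "I \<subseteq> W" "I \<subseteq> Eb m"
  shows "finite I \<and> card I \<le> card {r\<in>topset W. r < m}"
proof -
  have fin: "finite {r\<in>topset W. r < m}" by auto
  have "I \<subseteq> FV.span (wv W ` {r\<in>topset W. r < m})" using span_red[OF W] I by blast
  then have "finite I \<and> card I \<le> card (wv W ` {r\<in>topset W. r < m})"
    using FV.independent_span_bound[OF finite_imageI[OF fin] I(1)] by blast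
  then show ?thesis using card_image_le[OF fin, of "wv W"] by linarith
qed

lemma card_topset:
  assumes W: "FV.subspace W" "W \<subseteq> Eb n"
    and B: "FV.independent B" "finite B" "B \<subseteq> W" "W \<subseteq> FV.span B"
  shows "card (topset W) = card B"
proof -
  have ts: "topset W \<subseteq> {..<n}" by (rule topset_sub[OF W(2)])
  then have eqn: "{r\<in>topset W. r < n} = topset W" by auto
  have "card B \<le> card (topset W)" using card_bound[OF W B(1) B(3), of n] B(3) W(2) eqn by auto
  moreover
  have "wv W ` topset W \<subseteq> FV.span B" using wv B(4) by blast
  then have "card (wv W ` topset W) \<le> card B"
    using FV.independent_span_bound[OF B(2)] wv_indep[OF W(1), of n] eqn by auto
  then have "card (topset W) \<le> card B" using card_image[OF wv_inj] by simp
  ultimately show ?thesis by simp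
qed

definition projF :: "nat set \<Rightarrow> (nat \<Rightarrow> real) \<Rightarrow> (nat \<Rightarrow> real)" where
  "projF X f = (\<lambda>i. if i \<in> X then f i else 0)"

lemma projF_hom: "module_hom fsc fsc (projF X)"
  by (rule FV_mhom) (auto simp: projF_def fsc_def fun_eq_iff)

lemma projF_inj:
  assumes W: "FV.subspace W" "W \<subseteq> Eb n"
  shows "inj_on (projF (topset W)) W"
proof (rule inj_onI)
  fix f g assume fg: "f \<in> W" "g \<in> W" "projF (topset W) f = projF (topset W) g"
  define h where "h = f - g"
  have hW: "h \<in> W" using fg W h_def FV.subspace_diff by blast
  have hp: "\<And>i. i \<in> topset W \<Longrightarrow> h i = 0"
  proof -
    fix i assume "i \<in> topset W"
    then show "h i = 0" using fun_cong[OF fg(3), of i] by (simp add: h_def projF_def)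
  qed
  have "h = 0"
  proof (rule ccontr)
    assume "h \<noteq> 0"
    then obtain r where "h r \<noteq> 0" "\<forall>i>r. h i = 0" using top_exists hW W(2) by blast
    then have "r \<in> topset W" using hW unfolding topset_def by blast
    then show False using hp \<open>h r \<noteq> 0\<close> by blast
  qed
  then show "f = g" using h_def by simp
qed

lemma projF_surj:
  assumes W: "FV.subspace W" "W \<subseteq> Eb n"
  shows "u \<in> Eb m \<Longrightarrow> (\<forall>i. i \<notin> topset W \<longrightarrow> u i = 0) \<Longrightarrow> u \<in> projF (topset W) ` W"
proof (induction m arbitrary: u)
  case 0
  then have "u = 0" by (intro ext) (auto simp: Eb_def)
  moreover have "projF (topset W) 0 = 0" by (simp add: projF_def fun_eq_iff)
  ultimately show ?case using FV.subspace_0[OF W(1)] by force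
next
  case (Suc m)
  show ?case
  proof (cases "u m = 0")
    case True
    then have "u \<in> Eb m" using Suc.prems by (auto simp: Eb_def) (metis Suc_leI le_neq_implies_less)
    then show ?thesis using Suc by blast
  next
    case False
    then have mt: "m \<in> topset W" using Suc.prems by auto
    define w where "w = wv W m"
    have w: "w \<in> W" "w m \<noteq> 0" "\<forall>i>m. w i = 0" using wv[OF mt] w_def by auto
    define c where "c = u m / w m"
    define g where "g = u - fsc c (projF (topset W) w)"
    have gE: "g \<in> Eb m" unfolding Eb_def
    proof (intro CollectI allI impI)
      fix i assume "m \<le> i"
      then consider "i = m" | "i > m" by linarith
      then show "g i = 0"
      proof cases
        case 1 then show ?thesis using w mt by (simp add: g_def fsc_def projF_def c_def)
      next
        case 2 then have "u i = 0" "w i = 0" using Suc.prems w by (auto simp: Eb_def)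
        then show ?thesis by (simp add: g_def fsc_def projF_def)
      qed
    qed
    have g0: "\<forall>i. i \<notin> topset W \<longrightarrow> g i = 0" using Suc.prems unfolding g_def projF_def fsc_def by auto
    obtain f where f: "f \<in> W" "g = projF (topset W) f" using Suc.IH[OF gE g0] by blast
    have "projF (topset W) (f + fsc c w) = u"
    proof (rule ext)
      fix x show "projF (topset W) (f + fsc c w) x = u x"
        using fun_cong[OF f(2), of x] Suc.prems(2)
        by (cases "x \<in> topset W") (auto simp: g_def projF_def fsc_def)
    qed
    moreover have "f + fsc c w \<in> W" using W(1) f(1) w(1) by (intro FV.subspace_add FV.subspace_scale)
    ultimately show ?thesis by force
  qed
qed

definition dlt :: "nat \<Rightarrow> (nat \<Rightarrow> real)" where "dlt r = (\<lambda>i. if i = r then 1 else 0)"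

lemma in_span_dlt:
  assumes "u \<in> Eb m" "\<forall>i. i \<notin> X \<longrightarrow> u i = 0"
  shows "u \<in> FV.span (dlt ` {r\<in>X. r < m})"
proof -
  have fin: "finite {r\<in>X. r < m}" by auto
  have "u = (\<Sum>r\<in>{r\<in>X. r < m}. fsc (u r) (dlt r))"
  proof
    fix i
    have "(\<Sum>r\<in>{r\<in>X. r < m}. fsc (u r) (dlt r)) i = (\<Sum>r\<in>{r\<in>X. r < m}. (if i = r then u r else 0))"
      unfolding fsum_apply fsc_def dlt_def by (rule sum.cong) auto
    also have "\<dots> = (if i \<in> X \<and> i < m then u i else 0)"
      using fin by (simp add: sum.delta sum.delta')
    also have "\<dots> = u i" using assms by (auto simp: Eb_def)
    finally show "u i = (\<Sum>r\<in>{r\<in>X. r < m}. fsc (u r) (dlt r)) i" by simp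
  qed
  also have "\<dots> \<in> FV.span (dlt ` {r\<in>X. r < m})"
    by (intro FV.span_sum FV.span_scale FV.span_base) auto
  finally show ?thesis .
qed

lemma compare_count:
  assumes W: "FV.subspace W" "W \<subseteq> Eb n"
    and inj: "inj_on (projF X) W"
  shows "card {r\<in>topset W. r < m} \<le> card {r\<in>X. r < m}"
proof -
  let ?I = "wv W ` {r\<in>topset W. r < m}"
  have IW: "?I \<subseteq> W" using wv by blast
  have spW: "FV.span ?I \<subseteq> W" using FV.span_minimal[OF IW W(1)] .
  have ind: "FV.independent ?I" by (rule wv_indep[OF W(1)])
  have ind2: "FV.independent (projF X ` ?I)"
    using module_hom.independent_injective_image[OF projF_hom ind] inj_on_subset[OF inj spW] by blast
  have sub: "projF X ` ?I \<subseteq> FV.span (dlt ` {r\<in>X. r < m})"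
  proof
    fix v assume "v \<in> projF X ` ?I"
    then obtain r where r: "r \<in> topset W" "r < m" "v = projF X (wv W r)" by auto
    show "v \<in> FV.span (dlt ` {r\<in>X. r < m})"
      using wv[OF r(1)] r by (intro in_span_dlt) (auto simp: Eb_def projF_def)
  qed
  have "card (projF X ` ?I) \<le> card (dlt ` {r\<in>X. r < m})"
    using FV.independent_span_bound[OF _ ind2 sub] by auto
  also have "\<dots> \<le> card {r\<in>X. r < m}" by (rule card_image_le) auto
  finally have c1: "card (projF X ` ?I) \<le> card {r\<in>X. r < m}" .
  have "card (projF X ` ?I) = card ?I" by (rule card_image[OF inj_on_subset[OF inj IW]])
  also have "\<dots> = card {r\<in>topset W. r < m}" by (rule card_image[OF inj_on_subset[OF wv_inj]]) auto
  finally show ?thesis using c1 by simp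
qed

lemma sorted_lt_set:
  assumes fin: "finite X" and j: "j < card X"
  shows "{x\<in>X. x < sorted_list_of_set X ! j} = set (take j (sorted_list_of_set X))"
proof -
  let ?L = "sorted_list_of_set X"
  have ss: "sorted_wrt (<) ?L" by (simp add: strict_sorted_list_of_set)
  have len: "length ?L = card X" by simp
  have setL: "set ?L = X" using fin by simp
  show ?thesis
  proof (intro equalityI subsetI)
    fix x assume x: "x \<in> {x\<in>X. x < ?L ! j}"
    then have "x \<in> set ?L" using setL by simp
    then obtain p where p: "p < length ?L" "?L ! p = x" by (auto simp: in_set_conv_nth)
    have "x < ?L ! j" using x by simp
    have "p < j"
    proof (rule ccontr)
      assume "\<not> p < j"
      then have "j \<le> p" by simp
      have "?L ! j \<le> ?L ! p"
      proof (cases "j = p")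
        case False then have "j < p" using \<open>j \<le> p\<close> by simp
        then show ?thesis using sorted_wrt_nth_less[OF ss _ p(1)] by (simp add: less_imp_le)
      qed simp
      then show False using p \<open>x < ?L ! j\<close> by simp
    qed
    then show "x \<in> set (take j ?L)" using p by (auto simp: in_set_conv_nth)
  next
    fix x assume "x \<in> set (take j ?L)"
    then obtain p where p: "p < j" "?L ! p = x" using j len by (auto simp: in_set_conv_nth)
    then have "x < ?L ! j" using sorted_wrt_nth_less[OF ss p(1)] j len by simp
    moreover have "p < length ?L" using p j len by simp
    then have "x \<in> X" using p setL nth_mem by blast
    ultimately show "x \<in> {x\<in>X. x < ?L ! j}" by simp
  qed
qed

lemma card_take_sorted: "finite X \<Longrightarrow> j \<le> card X \<Longrightarrow> card (set (take j (sorted_list_of_set X))) = j"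
  by (simp add: distinct_card)

lemma elt_crit:
  assumes fin: "finite X" and i: "1 \<le> i" "i \<le> card X"
  shows "elt X i \<le> m \<longleftrightarrow> i \<le> card {x\<in>X. x \<le> m}"
proof -
  let ?L = "sorted_list_of_set X"
  let ?a = "?L ! (i - 1)"
  have ss: "sorted_wrt (<) ?L" by (simp add: strict_sorted_list_of_set)
  have len: "length ?L = card X" by simp
  have setL: "set ?L = X" using fin by simp
  have finm: "finite {x\<in>X. x \<le> m}" using fin by simp
  show ?thesis
  proof
    assume "elt X i \<le> m"
    then have am: "?a \<le> m" by (simp add: elt_def)
    have "set (take i ?L) \<subseteq> {x\<in>X. x \<le> m}"
    proof
      fix x assume "x \<in> set (take i ?L)"
      then obtain p where p: "p < i" "?L ! p = x" using i len by (auto simp: in_set_conv_nth)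
      have "x \<le> ?a"
      proof (cases "p = i - 1")
        case True then show ?thesis using p by simp
      next
        case False then have "p < i - 1" using p by linarith
        moreover have "i - 1 < length ?L" using i len by simp
        ultimately have "?L ! p < ?a" using sorted_wrt_nth_less[OF ss] by blast
        then show ?thesis using p(2) by simp
      qed
      moreover have "p < length ?L" using p i len by simp
      then have "x \<in> X" using p setL nth_mem by blast
      ultimately show "x \<in> {x\<in>X. x \<le> m}" using am by simp
    qed
    then have "card (set (take i ?L)) \<le> card {x\<in>X. x \<le> m}" using finm card_mono by blast
    then show "i \<le> card {x\<in>X. x \<le> m}" using card_take_sorted[OF fin i(2)] by simp
  next
    assume c: "i \<le> card {x\<in>X. x \<le> m}"
    show "elt X i \<le> m"
    proof (rule ccontr)
      assume "\<not> elt X i \<le> m"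
      then have "m < ?a" by (simp add: elt_def)
      then have "{x\<in>X. x \<le> m} \<subseteq> {x\<in>X. x < ?a}" by auto
      also have "\<dots> = set (take (i - 1) ?L)" using sorted_lt_set[OF fin, of "i - 1"] i by simp
      finally have "card {x\<in>X. x \<le> m} \<le> i - 1"
        using card_mono[OF finite_set] card_take_sorted[OF fin, of "i - 1"] i by fastforce
      then show False using c i by simp
    qed
  qed
qed

lemma Rj_carrier[simp]: "Rj n j t \<in> carrier_mat n n"
  by (simp add: Rj_def)

lemma sum2:
  fixes v :: "real vec"
  assumes "p < n" "q < n" "p \<noteq> q"
  shows "(\<Sum>b\<in>{0..<n}. (if b = p then x else if b = q then y else 0) * v $ b) = x * v $ p + y * v $ q"
proof -
  have "(\<Sum>b\<in>{0..<n}. (if b = p then x else if b = q then y else 0) * v $ b)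
      = (\<Sum>b\<in>{0..<n}. (if b = p then x * v $ p else 0) + (if b = q then y * v $ q else 0))"
    using assms(3) by (intro sum.cong) auto
  also have "\<dots> = x * v $ p + y * v $ q" using assms by (simp add: sum.distrib)
  finally show ?thesis .
qed

lemma sum1:
  fixes v :: "real vec"
  assumes "p < n"
  shows "(\<Sum>b\<in>{0..<n}. (if p = b then 1 else 0) * v $ b) = v $ p"
proof -
  have "(\<Sum>b\<in>{0..<n}. (if p = b then 1 else 0) * v $ b) = (\<Sum>b\<in>{0..<n}. if b = p then v $ p else 0)"
    by (rule sum.cong) auto
  also have "\<dots> = v $ p" using assms by (simp add: sum.delta)
  finally show ?thesis .
qed

lemma Rj_vec:
  assumes j: "1 \<le> j" "j < n" and v: "v \<in> carrier_vec n"
  shows "Rj n j t *\<^sub>v v = vec n (\<lambda>a. if Suc a = j then cos t * v $ a - sin t * v $ Suc a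
      else if a = j then sin t * v $ (a - 1) + cos t * v $ a else v $ a)"
proof (rule eq_vecI)
  show "dim_vec (Rj n j t *\<^sub>v v) = dim_vec (vec n (\<lambda>a. if Suc a = j then cos t * v $ a - sin t * v $ Suc a
      else if a = j then sin t * v $ (a - 1) + cos t * v $ a else v $ a))" by (simp add: Rj_def)
  fix a assume "a < dim_vec (vec n (\<lambda>a. if Suc a = j then cos t * v $ a - sin t * v $ Suc a
      else if a = j then sin t * v $ (a - 1) + cos t * v $ a else v $ a))"
  then have a: "a < n" by simp
  have dv: "dim_vec v = n" using v by simp
  have "(Rj n j t *\<^sub>v v) $ a = (\<Sum>b\<in>{0..<n}. Rj n j t $$ (a, b) * v $ b)"
    using a dv by (simp add: Rj_def scalar_prod_def)
  also have "\<dots> = (if Suc a = j then cos t * v $ a - sin t * v $ Suc a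
      else if a = j then sin t * v $ (a - 1) + cos t * v $ a else v $ a)"
  proof -
    consider "Suc a = j" | "a = j" | "Suc a \<noteq> j" "a \<noteq> j" by blast
    then show ?thesis
    proof cases
      case 1
      have "(\<Sum>b\<in>{0..<n}. Rj n j t $$ (a, b) * v $ b)
          = (\<Sum>b\<in>{0..<n}. (if b = a then cos t else if b = Suc a then - sin t else 0) * v $ b)"
        using 1 a by (intro sum.cong) (auto simp: Rj_def)
      also have "\<dots> = cos t * v $ a - sin t * v $ Suc a" using 1 a j by (subst sum2) auto
      finally show ?thesis using 1 by simp
    next
      case 2
      have "(\<Sum>b\<in>{0..<n}. Rj n j t $$ (a, b) * v $ b)
          = (\<Sum>b\<in>{0..<n}. (if b = a then cos t else if b = a - 1 then sin t else 0) * v $ b)"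
        using 2 a j by (intro sum.cong) (auto simp: Rj_def)
      also have "\<dots> = sin t * v $ (a - 1) + cos t * v $ a" using 2 a j by (subst sum2) auto
      finally show ?thesis using 2 by simp
    next
      case 3
      have "(\<Sum>b\<in>{0..<n}. Rj n j t $$ (a, b) * v $ b)
          = (\<Sum>b\<in>{0..<n}. (if a = b then 1 else 0) * v $ b)"
        using 3 a j by (intro sum.cong) (auto simp: Rj_def)
      also have "\<dots> = v $ a" using a by (rule sum1)
      finally show ?thesis using 3 by simp
    qed
  qed
  finally show "(Rj n j t *\<^sub>v v) $ a = vec n (\<lambda>a. if Suc a = j then cos t * v $ a - sin t * v $ Suc a
      else if a = j then sin t * v $ (a - 1) + cos t * v $ a else v $ a) $ a" using a by simp
qed

lemma Rj_carrier_vec: "v \<in> carrier_vec n \<Longrightarrow> Rj n j t *\<^sub>v v \<in> carrier_vec n"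
  using Rj_carrier mult_mat_vec_carrier by blast

lemma cs1: "cos t * cos t + sin t * sin t = (1::real)"
  by (metis sin_cos_squared_add power2_eq_square add.commute)

lemma alg1: "cos (-t) * (cos t * x - sin t * y) - sin (-t) * (sin t * x + cos t * y) = (x::real)"
proof -
  have "cos (-t) * (cos t * x - sin t * y) - sin (-t) * (sin t * x + cos t * y) = x * (cos t * cos t) + x * (sin t * sin t)"
    by (simp add: algebra_simps)
  also have "\<dots> = x" by (metis cs1 distrib_left mult_1_right)
  finally show ?thesis .
qed

lemma alg2: "sin (-t) * (cos t * x - sin t * y) + cos (-t) * (sin t * x + cos t * y) = (y::real)"
proof -
  have "sin (-t) * (cos t * x - sin t * y) + cos (-t) * (sin t * x + cos t * y) = y * (cos t * cos t) + y * (sin t * sin t)"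
    by (simp add: algebra_simps)
  also have "\<dots> = y" by (metis cs1 distrib_left mult_1_right)
  finally show ?thesis .
qed

lemma Rj_idx:
  assumes j: "1 \<le> j" "j < n" and v: "v \<in> carrier_vec n" and a: "a < n"
  shows "(Rj n j t *\<^sub>v v) $ a = (if Suc a = j then cos t * v $ a - sin t * v $ Suc a
      else if a = j then sin t * v $ (a - 1) + cos t * v $ a else v $ a)"
  using Rj_vec[OF j v] a by simp

lemma Rj_inv:
  assumes j: "1 \<le> j" "j < n" and v: "v \<in> carrier_vec n"
  shows "Rj n j (- t) *\<^sub>v (Rj n j t *\<^sub>v v) = v"
proof (rule eq_vecI)
  have c: "Rj n j t *\<^sub>v v \<in> carrier_vec n" using v by (rule Rj_carrier_vec)
  show "dim_vec (Rj n j (- t) *\<^sub>v (Rj n j t *\<^sub>v v)) = dim_vec v" using v by (simp add: Rj_def)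
  fix a assume "a < dim_vec v"
  then have a: "a < n" using v by simp
  note R1 = Rj_idx[OF j c a, of "-t"]
  consider "Suc a = j" | "a = j" | "Suc a \<noteq> j" "a \<noteq> j" by blast
  then show "(Rj n j (- t) *\<^sub>v (Rj n j t *\<^sub>v v)) $ a = v $ a"
  proof cases
    case 1
    have "Suc a < n" using 1 j by simp
    have "j - Suc 0 = a" using 1 by simp
    then show ?thesis using R1 1 Rj_idx[OF j v a, of t] Rj_idx[OF j v \<open>Suc a < n\<close>, of t] alg1 by simp
  next
    case 2
    have "a - 1 < n" "Suc (a - 1) = j" using 2 j a by auto
    then show ?thesis using R1 2 Rj_idx[OF j v a, of t] Rj_idx[OF j v \<open>a - 1 < n\<close>, of t] alg2 by simp
  next
    case 3
    then show ?thesis using R1 Rj_idx[OF j v a, of t] by simp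
  qed
qed

definition act :: "nat \<Rightarrow> (nat \<times> nat \<Rightarrow> real) \<Rightarrow> (nat \<times> nat) list \<Rightarrow> real vec \<Rightarrow> real vec" where
  "act n \<theta> zs v = foldr (\<lambda>(i, j) v. Rj n j (\<theta> (i, j)) *\<^sub>v v) zs v"

definition Mz :: "nat \<Rightarrow> (nat \<times> nat \<Rightarrow> real) \<Rightarrow> (nat \<times> nat) list \<Rightarrow> real mat" where
  "Mz n \<theta> zs = foldr (\<lambda>(i, j) M. Rj n j (\<theta> (i, j)) * M) zs (1\<^sub>m n)"

lemma act_Cons: "act n \<theta> ((i, j) # zs) v = Rj n j (\<theta> (i, j)) *\<^sub>v act n \<theta> zs v"
  by (simp add: act_def)

lemma act_Nil: "act n \<theta> [] v = v" by (simp add: act_def)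

lemma act_append: "act n \<theta> (xs @ ys) v = act n \<theta> xs (act n \<theta> ys v)"
  by (simp add: act_def)

lemma Mz_carrier: "Mz n \<theta> zs \<in> carrier_mat n n"
  by (induction zs) (auto simp: Mz_def intro: mult_carrier_mat[OF Rj_carrier])

lemma Mz_act: "v \<in> carrier_vec n \<Longrightarrow> Mz n \<theta> zs *\<^sub>v v = act n \<theta> zs v"
proof (induction zs)
  case Nil then show ?case by (simp add: Mz_def act_def)
next
  case (Cons z zs)
  obtain i j where z: "z = (i, j)" by force
  have "Mz n \<theta> (z # zs) = Rj n j (\<theta> (i, j)) * Mz n \<theta> zs" by (simp add: Mz_def z)
  then have "Mz n \<theta> (z # zs) *\<^sub>v v = Rj n j (\<theta> (i, j)) *\<^sub>v (Mz n \<theta> zs *\<^sub>v v)"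
    using assoc_mult_mat_vec[OF Rj_carrier Mz_carrier Cons.prems] by simp
  then show ?case using Cons by (simp add: z act_Cons)
qed

lemma act_carrier: "v \<in> carrier_vec n \<Longrightarrow> act n \<theta> zs v \<in> carrier_vec n"
  by (metis Mz_act Mz_carrier mult_mat_vec_carrier)

lemma act_inj:
  assumes "\<forall>(i, j)\<in>set zs. 1 \<le> j \<and> j < n"
  shows "inj_on (act n \<theta> zs) (carrier_vec n)"
  using assms
proof (induction zs)
  case Nil then show ?case by (simp add: act_Nil)
next
  case (Cons z zs)
  obtain i j where z: "z = (i, j)" by force
  have j: "1 \<le> j" "j < n" using Cons.prems z by auto
  show ?case
  proof (rule inj_onI)
    fix v w assume vw: "v \<in> carrier_vec n" "w \<in> carrier_vec n" "act n \<theta> (z # zs) v = act n \<theta> (z # zs) w"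
    then have "Rj n j (- \<theta> (i, j)) *\<^sub>v (Rj n j (\<theta> (i, j)) *\<^sub>v act n \<theta> zs v)
             = Rj n j (- \<theta> (i, j)) *\<^sub>v (Rj n j (\<theta> (i, j)) *\<^sub>v act n \<theta> zs w)"
      by (simp add: z act_Cons)
    then have "act n \<theta> zs v = act n \<theta> zs w"
      using Rj_inv[OF j act_carrier[OF vw(1)]] Rj_inv[OF j act_carrier[OF vw(2)]] by simp
    then show "v = w" using Cons vw inj_onD by fastforce
  qed
qed

definition Ev :: "nat \<Rightarrow> nat \<Rightarrow> real vec set" where
  "Ev n m = {v \<in> carrier_vec n. \<forall>r. m \<le> r \<longrightarrow> r < n \<longrightarrow> v $ r = 0}"

lemma Rj_supp_a:
  assumes j: "1 \<le> j" "j < n" "j \<noteq> m" and v: "v \<in> Ev n m"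
  shows "Rj n j t *\<^sub>v v \<in> Ev n m"
proof -
  have vc: "v \<in> carrier_vec n" using v by (simp add: Ev_def)
  show ?thesis unfolding Ev_def
  proof (intro CollectI conjI allI impI)
    show "Rj n j t *\<^sub>v v \<in> carrier_vec n" using vc by (rule Rj_carrier_vec)
    fix r assume r: "m \<le> r" "r < n"
    show "(Rj n j t *\<^sub>v v) $ r = 0"
    proof (cases "j < m")
      case True
      then show ?thesis using Rj_idx[OF j(1,2) vc r(2)] r v by (auto simp: Ev_def)
    next
      case False
      then have "m < j" using j by simp
      then have "v $ (j - 1) = 0" "v $ j = 0" using v j by (auto simp: Ev_def)
      then show ?thesis using Rj_idx[OF j(1,2) vc r(2)] r v by (auto simp: Ev_def)
    qed
  qed
qed

lemma Rj_supp_b: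
  assumes j: "1 \<le> j" "j < n" and v: "v \<in> Ev n j"
  shows "Rj n j t *\<^sub>v v \<in> Ev n (Suc j)"
proof -
  have vc: "v \<in> carrier_vec n" using v by (simp add: Ev_def)
  show ?thesis unfolding Ev_def
  proof (intro CollectI conjI allI impI)
    show "Rj n j t *\<^sub>v v \<in> carrier_vec n" using vc by (rule Rj_carrier_vec)
    fix r assume r: "Suc j \<le> r" "r < n"
    then show "(Rj n j t *\<^sub>v v) $ r = 0" using Rj_idx[OF j(1,2) vc r(2)] v by (auto simp: Ev_def)
  qed
qed

lemma Rj_supp_c:
  assumes j: "1 \<le> j" "j < n" and s: "sin t = 0" and v: "v \<in> Ev n j"
  shows "Rj n j t *\<^sub>v v \<in> Ev n j"
proof -
  have vc: "v \<in> carrier_vec n" using v by (simp add: Ev_def)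
  show ?thesis unfolding Ev_def
  proof (intro CollectI conjI allI impI)
    show "Rj n j t *\<^sub>v v \<in> carrier_vec n" using vc by (rule Rj_carrier_vec)
    fix r assume r: "j \<le> r" "r < n"
    then show "(Rj n j t *\<^sub>v v) $ r = 0" using Rj_idx[OF j(1,2) vc r(2)] v s by (auto simp: Ev_def)
  qed
qed

lemma act_pres:
  assumes "\<forall>(i, j)\<in>set zs. 1 \<le> j \<and> j < n \<and> j \<noteq> m" and "v \<in> Ev n m"
  shows "act n \<theta> zs v \<in> Ev n m"
  using assms
proof (induction zs)
  case Nil then show ?case by (simp add: act_Nil)
next
  case (Cons z zs)
  obtain i j where z: "z = (i, j)" by force
  show ?case using Cons z by (auto simp: act_Cons intro!: Rj_supp_a)
qed

definition rowl :: "nat \<Rightarrow> nat \<Rightarrow> (nat \<times> nat) list" where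
  "rowl i p = map (\<lambda>j. (i, j)) (rev [i..<p])"

lemma rowl_Suc: "i \<le> p \<Longrightarrow> rowl i (Suc p) = (i, p) # rowl i p"
  by (simp add: rowl_def)

lemma rowl_C1:
  assumes "1 \<le> i" "p \<le> n" "v \<in> Ev n i"
  shows "i \<le> p \<Longrightarrow> act n \<theta> (rowl i p) v \<in> Ev n p"
  using assms(2)
proof (induction p)
  case 0 then show ?case using assms by (simp add: rowl_def act_Nil)
next
  case (Suc p)
  show ?case
  proof (cases "i = Suc p")
    case True then show ?thesis using assms by (simp add: rowl_def act_Nil)
  next
    case False
    then have ip: "i \<le> p" using Suc by simp
    then have "act n \<theta> (rowl i p) v \<in> Ev n p" using Suc by simp
    then show ?thesis using ip assms Suc.prems by (simp add: rowl_Suc act_Cons Rj_supp_b)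
  qed
qed

lemma rowl_C2:
  assumes "1 \<le> i" "p \<le> n" "v \<in> Ev n i" "i \<le> j0" "sin (\<theta> (i, j0)) = 0"
  shows "j0 < p \<Longrightarrow> act n \<theta> (rowl i p) v \<in> Ev n (p - 1)"
  using assms(2)
proof (induction p)
  case 0 then show ?case by simp
next
  case (Suc p)
  have ip: "i \<le> p" using Suc.prems assms by simp
  show ?case
  proof (cases "j0 = p")
    case True
    have "act n \<theta> (rowl i p) v \<in> Ev n p" using rowl_C1[OF assms(1) _ assms(3) ip] Suc.prems by simp
    then show ?thesis using True ip assms Suc.prems by (simp add: rowl_Suc act_Cons Rj_supp_c)
  next
    case False
    then have "j0 < p" using Suc.prems by simp
    then have "act n \<theta> (rowl i p) v \<in> Ev n (p - 1)" using Suc by simp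
    then have "Rj n p (\<theta> (i, p)) *\<^sub>v act n \<theta> (rowl i p) v \<in> Ev n (p - 1)"
      using ip assms Suc.prems \<open>j0 < p\<close> by (intro Rj_supp_a) auto
    then show ?thesis using ip by (auto simp: rowl_Suc act_Cons Ev_def)
  qed
qed

lemma elt_less:
  assumes "finite S" "1 \<le> i" "i < i'" "i' \<le> card S"
  shows "elt S i < elt S i'"
proof -
  have ss: "sorted_wrt (<) (sorted_list_of_set S)" by (simp add: strict_sorted_list_of_set)
  have "i - 1 < i' - 1" "i' - 1 < length (sorted_list_of_set S)" using assms by auto
  then show ?thesis unfolding elt_def using sorted_wrt_nth_less[OF ss] by blast
qed

lemma elt_in:
  assumes "finite S" "1 \<le> i" "i \<le> card S"
  shows "elt S i \<in> S"
proof -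
  have "i - 1 < length (sorted_list_of_set S)" using assms by auto
  then have "elt S i \<in> set (sorted_list_of_set S)" unfolding elt_def by (rule nth_mem)
  then show ?thesis using assms(1) by simp
qed

lemma elt_ge:
  assumes "finite S" "S \<subseteq> {1..n}"
  shows "1 \<le> i \<Longrightarrow> i \<le> card S \<Longrightarrow> i \<le> elt S i"
proof (induction i)
  case 0 then show ?case by simp
next
  case (Suc i)
  show ?case
  proof (cases "i = 0")
    case True
    then show ?thesis using elt_in[OF assms(1) Suc.prems] assms(2) by force
  next
    case False
    then have "i \<le> elt S i" using Suc by simp
    moreover have "elt S i < elt S (Suc i)" using elt_less[OF assms(1)] Suc.prems False by simp
    ultimately show ?thesis by simp
  qed
qed

lemma elt_le_n:
  assumes "finite S" "S \<subseteq> {1..n}" "1 \<le> i" "i \<le> card S"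
  shows "elt S i \<le> n"
  using elt_in[OF assms(1,3,4)] assms(2) by auto

lemma Z_list_rows: "Z_list k S = concat (map (\<lambda>i. rowl i (elt S i)) [1..<Suc k])"
  by (simp add: Z_list_def rowl_def)

lemma set_rows: "(a, b) \<in> set (concat (map (\<lambda>i. rowl i (elt S i)) xs)) \<longleftrightarrow> a \<in> set xs \<and> a \<le> b \<and> b < elt S a"
  by (auto simp: rowl_def intro!: bexI[of _ a] image_eqI[of _ _ b])

lemma Z_list_split:
  assumes "1 \<le> c" "c \<le> k"
  shows "Z_list k S = concat (map (\<lambda>i. rowl i (elt S i)) [1..<c]) @ rowl c (elt S c)
      @ concat (map (\<lambda>i. rowl i (elt S i)) [Suc c..<Suc k])"
proof -
  have "[1..<Suc k] = [1..<c] @ [c..<Suc k]" using upt_add_eq_append[of 1 c "Suc k - c"] assms by simp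
  moreover have "[c..<Suc k] = c # [Suc c..<Suc k]" using assms by (simp add: upt_conv_Cons)
  ultimately show ?thesis unfolding Z_list_rows by simp
qed

lemma unit_Ev: "c < n \<Longrightarrow> unit_vec n c \<in> Ev n (Suc c)"
  by (auto simp: Ev_def)

lemma col_supp:
  assumes S: "finite S" "S \<subseteq> {1..n}" "card S = k" and c: "1 \<le> c" "c \<le> k" and kn: "k \<le> n"
  shows "act n \<theta> (Z_list k S) (unit_vec n (c - 1)) \<in> Ev n (elt S c)"
    and "c \<le> j0 \<Longrightarrow> j0 < elt S c \<Longrightarrow> sin (\<theta> (c, j0)) = 0 \<Longrightarrow>
         act n \<theta> (Z_list k S) (unit_vec n (c - 1)) \<in> Ev n (elt S c - 1)"
proof -
  let ?H = "concat (map (\<lambda>i. rowl i (elt S i)) [1..<c])"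
  let ?T = "concat (map (\<lambda>i. rowl i (elt S i)) [Suc c..<Suc k])"
  have split: "act n \<theta> (Z_list k S) (unit_vec n (c - 1))
      = act n \<theta> ?H (act n \<theta> (rowl c (elt S c)) (act n \<theta> ?T (unit_vec n (c - 1))))"
    unfolding Z_list_split[OF c] act_append by simp
  have u: "unit_vec n (c - 1) \<in> Ev n c" using unit_Ev[of "c - 1" n] c kn by simp
  have v1: "act n \<theta> ?T (unit_vec n (c - 1)) \<in> Ev n c"
  proof (rule act_pres[OF _ u], intro ballI, clarify)
    fix a b assume ab: "(a, b) \<in> set ?T"
    then have a: "Suc c \<le> a" "a \<le> k" "a \<le> b" "b < elt S a" using set_rows[THEN iffD1, OF ab] by auto
    have "elt S a \<le> n" using elt_le_n[OF S(1,2)] a c S(3) by simp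
    then show "1 \<le> b \<and> b < n \<and> b \<noteq> c" using a c by simp
  qed
  have ce: "c \<le> elt S c" using elt_ge[OF S(1,2) c(1)] c S(3) by simp
  have en: "elt S c \<le> n" using elt_le_n[OF S(1,2) c(1)] c S(3) by simp
  have Hok: "\<forall>(a, b)\<in>set ?H. 1 \<le> b \<and> b < n \<and> b \<noteq> m" if m: "elt S c - 1 \<le> m" for m
  proof (intro ballI, clarify)
    fix a b assume ab: "(a, b) \<in> set ?H"
    then have a: "1 \<le> a" "a < c" "a \<le> b" "b < elt S a" using set_rows[THEN iffD1, OF ab] by auto
    have "elt S a < elt S c" using elt_less[OF S(1) a(1) a(2)] c S(3) by simp
    then show "1 \<le> b \<and> b < n \<and> b \<noteq> m" using a en m by linarith
  qed
  have v2: "act n \<theta> (rowl c (elt S c)) (act n \<theta> ?T (unit_vec n (c - 1))) \<in> Ev n (elt S c)"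
    using rowl_C1[OF c(1) en v1 ce] .
  show "act n \<theta> (Z_list k S) (unit_vec n (c - 1)) \<in> Ev n (elt S c)"
    unfolding split by (rule act_pres[OF Hok v2]) simp
  assume j0: "c \<le> j0" "j0 < elt S c" "sin (\<theta> (c, j0)) = 0"
  have v2': "act n \<theta> (rowl c (elt S c)) (act n \<theta> ?T (unit_vec n (c - 1))) \<in> Ev n (elt S c - 1)"
    by (rule rowl_C2[where \<theta>=\<theta>, OF c(1) en v1 j0(1) j0(3) j0(2)])
  show "act n \<theta> (Z_list k S) (unit_vec n (c - 1)) \<in> Ev n (elt S c - 1)"
    unfolding split by (rule act_pres[OF Hok v2']) simp
qed

definition fvn :: "nat \<Rightarrow> real vec \<Rightarrow> (nat \<Rightarrow> real)" where
  "fvn n v = (\<lambda>i. if i < n then v $ i else 0)"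

lemma fvn_inj: "inj_on (fvn n) (carrier_vec n)"
proof (rule inj_onI)
  fix v w assume vw: "v \<in> carrier_vec n" "w \<in> carrier_vec n" "fvn n v = fvn n w"
  show "v = w"
  proof (rule eq_vecI)
    fix i assume "i < dim_vec w"
    then have "i < n" using vw by simp
    then show "v $ i = w $ i" using fun_cong[OF vw(3), of i] by (simp add: fvn_def)
  qed (use vw in simp)
qed

lemma fvn_Eb: "fvn n v \<in> Eb n" by (simp add: fvn_def Eb_def)

lemma fvn_Ev: "v \<in> Ev n m \<Longrightarrow> fvn n v \<in> Eb m"
  by (auto simp: fvn_def Eb_def Ev_def)

lemma fvn_add: "v \<in> carrier_vec n \<Longrightarrow> w \<in> carrier_vec n \<Longrightarrow> fvn n (v + w) = fvn n v + fvn n w"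
  by (auto simp: fvn_def fun_eq_iff)

lemma fvn_smult: "v \<in> carrier_vec n \<Longrightarrow> fvn n (c \<cdot>\<^sub>v v) = fsc c (fvn n v)"
  by (auto simp: fvn_def fun_eq_iff fsc_def)

lemma vec_fvn: "v \<in> carrier_vec n \<Longrightarrow> vec n (fvn n v) = v"
  by (auto simp: fvn_def)

lemma fvn_vec: "f \<in> Eb n \<Longrightarrow> fvn n (vec n f) = f"
  by (auto simp: fvn_def Eb_def fun_eq_iff)

lemma fvn_proj: "v \<in> carrier_vec n \<Longrightarrow> fvn n (proj n T v) = projF {r. Suc r \<in> T} (fvn n v)"
  by (auto simp: fvn_def proj_def projF_def fun_eq_iff)

lemma card_Suc_shift:
  assumes "0 \<notin> X"
  shows "card {x\<in>X. x \<le> m} = card {r\<in>{r. Suc r \<in> X}. r < m}"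
proof -
  have "{x\<in>X. x \<le> m} = Suc ` {r\<in>{r. Suc r \<in> X}. r < m}"
  proof (intro equalityI subsetI)
    fix x assume x: "x \<in> {x\<in>X. x \<le> m}"
    then have "x \<noteq> 0" using assms by (metis (mono_tags, lifting) mem_Collect_eq)
    then obtain r where "x = Suc r" using not0_implies_Suc by blast
    then show "x \<in> Suc ` {r\<in>{r. Suc r \<in> X}. r < m}" using x by auto
  qed auto
  then show ?thesis by (simp add: card_image)
qed

lemma dlt_indep: "FV.independent (dlt ` {..<m})"
proof (induction m)
  case 0 then show ?case by (simp add: FV.independent_empty)
next
  case (Suc m)
  have "FV.span (dlt ` {..<m}) \<subseteq> Eb m"
    by (rule FV.span_minimal[OF _ subspace_Eb]) (auto simp: Eb_def dlt_def)
  moreover have "dlt m \<notin> Eb m" by (auto simp: Eb_def dlt_def)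
  ultimately have "dlt m \<notin> FV.span (dlt ` {..<m})" by blast
  then show ?case unfolding lessThan_Suc image_insert using Suc by (rule FV.independent_insertI)
qed

lemma dlt_inj: "inj dlt"
  by (rule injI) (metis dlt_def one_neq_zero)

lemma Eb_span_dlt: "Eb k \<subseteq> FV.span (dlt ` {..<k})"
proof
  fix f assume "f \<in> Eb k"
  then have "f \<in> FV.span (dlt ` {r\<in>UNIV. r < k})" by (intro in_span_dlt) auto
  moreover have "{r\<in>UNIV. r < k} = {..<k}" by auto
  ultimately show "f \<in> FV.span (dlt ` {..<k})" by simp
qed

lemma id_nk_mult:
  assumes x: "x \<in> carrier_vec k" and kn: "k \<le> n"
  shows "id_nk n k *\<^sub>v x = vec n (\<lambda>a. if a < k then x $ a else 0)"
proof (rule eq_vecI)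
  fix a assume "a < dim_vec (vec n (\<lambda>a. if a < k then x $ a else 0))"
  then have a: "a < n" by simp
  have "(id_nk n k *\<^sub>v x) $ a = (\<Sum>b\<in>{0..<k}. (if a = b then 1 else 0) * x $ b)"
    using a x by (simp add: id_nk_def scalar_prod_def)
  also have "\<dots> = (\<Sum>b\<in>{0..<k}. if b = a then x $ a else 0)" by (rule sum.cong) auto
  also have "\<dots> = (if a < k then x $ a else 0)" by (simp add: sum.delta)
  finally show "(id_nk n k *\<^sub>v x) $ a = vec n (\<lambda>a. if a < k then x $ a else 0) $ a" using a by simp
qed (simp add: id_nk_def)

lemma id_nk_carrier: "id_nk n k \<in> carrier_mat n k" by (simp add: id_nk_def)

theorem lemma2p11:
  fixes n k :: nat and S :: "nat set" and \<theta> :: "nat \<times> nat \<Rightarrow> real"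
  assumes "1 \<le> k" and "k \<le> n"
    and "S \<in> subsets_nk n k"
    and "\<forall>z \<in> Z k S. \<theta> z \<in> {0..pi}"
    and "\<exists>z \<in> Z k S. \<theta> z \<notin> {0<..<pi}"
  shows "Rot n k S \<theta> \<in> (\<Union>T \<in> {T \<in> subsets_nk n k. gale_less k T S}. schubert_cell k n T)"
proof -
  note k1 = assms(1) and kn = assms(2)
  have Ssub: "S \<subseteq> {1..n}" and cS: "card S = k" using assms(3) by (auto simp: subsets_nk_def)
  have finS: "finite S" using cS k1 card_ge_0_finite[of S] by simp
  define L where "L = Z_list k S"
  define M where "M = Mz n \<theta> L"
  define A where "A = M * id_nk n k"
  define V where "V = col A"
  have M: "M \<in> carrier_mat n n" by (simp add: M_def Mz_carrier)
  have A: "A \<in> carrier_mat n k" using M by (simp add: A_def id_nk_carrier)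
  have RotV: "Rot n k S \<theta> = V" by (simp add: Rot_def V_def A_def M_def Mz_def L_def)
  have Lok: "\<forall>(a, b)\<in>set L. 1 \<le> b \<and> b < n"
  proof (intro ballI, clarify)
    fix a b assume "(a, b) \<in> set L"
    then have a: "a \<in> set [1..<Suc k]" "a \<le> b" "b < elt S a"
      using set_rows[THEN iffD1] unfolding L_def Z_list_rows by blast+
    then have "elt S a \<le> n" using elt_le_n[OF finS Ssub] cS by auto
    then show "1 \<le> b \<and> b < n" using a by auto
  qed
  have Ax: "A *\<^sub>v x = act n \<theta> L (vec n (\<lambda>a. if a < k then x $ a else 0))" if x: "x \<in> carrier_vec k" for x
  proof -
    have "A *\<^sub>v x = M *\<^sub>v (id_nk n k *\<^sub>v x)" unfolding A_def using M id_nk_carrier x by (rule assoc_mult_mat_vec)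
    then show ?thesis using id_nk_mult[OF x kn] Mz_act M_def by simp
  qed
  have VGr: "V \<in> Gr k n"
  proof -
    have "inj_on (\<lambda>x. A *\<^sub>v x) (carrier_vec k)"
    proof (rule inj_onI)
      fix x y assume xy: "x \<in> carrier_vec k" "y \<in> carrier_vec k" "A *\<^sub>v x = A *\<^sub>v y"
      then have "act n \<theta> L (vec n (\<lambda>a. if a < k then x $ a else 0)) = act n \<theta> L (vec n (\<lambda>a. if a < k then y $ a else 0))"
        using Ax by simp
      then have e: "vec n (\<lambda>a. if a < k then x $ a else 0) = vec n (\<lambda>a. if a < k then y $ a else 0)"
        by (rule inj_onD[OF act_inj[OF Lok] _ vec_carrier vec_carrier])
      have "x $ a = y $ a" if a: "a < k" for a
      proof -
        have "vec n (\<lambda>a. if a < k then x $ a else 0) $ a = vec n (\<lambda>a. if a < k then y $ a else 0) $ a"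
          using e by simp
        then show ?thesis using a kn by simp
      qed
      then show "x = y" using xy by (intro eq_vecI) auto
    qed
    then show ?thesis unfolding Gr_def V_def using A by blast
  qed
  define \<Phi> where "\<Phi> = (\<lambda>g. fvn n (M *\<^sub>v vec n g))"
  define W where "W = fvn n ` V"
  have Phi_hom: "module_hom fsc fsc \<Phi>"
  proof (rule FV_mhom)
    fix x y :: "nat \<Rightarrow> real"
    have "vec n (x + y) = vec n x + vec n y" by auto
    then show "\<Phi> (x + y) = \<Phi> x + \<Phi> y" unfolding \<Phi>_def
      using mult_add_distrib_mat_vec[OF M, of "vec n x" "vec n y"] M by (simp add: fvn_add)
  next
    fix c and x :: "nat \<Rightarrow> real"
    have "vec n (fsc c x) = c \<cdot>\<^sub>v vec n x" by (auto simp: fsc_def)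
    then show "\<Phi> (fsc c x) = fsc c (\<Phi> x)" unfolding \<Phi>_def
      using mult_mat_vec[OF M, of "vec n x" c] M by (simp add: fvn_smult)
  qed
  have Phi_act: "\<Phi> g = fvn n (act n \<theta> L (vec n g))" for g
    unfolding \<Phi>_def using Mz_act M_def by simp
  have WPhi: "W = \<Phi> ` Eb k"
  proof (intro equalityI subsetI)
    fix f assume "f \<in> W"
    then obtain x where x: "x \<in> carrier_vec k" "f = fvn n (A *\<^sub>v x)"
      unfolding W_def V_def col_def using A by auto
    define g where "g = (\<lambda>a. if a < k then x $ a else 0)"
    have "g \<in> Eb k" by (auto simp: g_def Eb_def)
    moreover have "f = \<Phi> g" using x Ax Phi_act g_def by simp
    ultimately show "f \<in> \<Phi> ` Eb k" by blast
  next
    fix f assume "f \<in> \<Phi> ` Eb k"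
    then obtain g where g: "g \<in> Eb k" "f = \<Phi> g" by blast
    define x where "x = vec k g"
    have "vec n (\<lambda>a. if a < k then x $ a else 0) = vec n g" using g(1) by (auto simp: x_def Eb_def)
    moreover have xc: "x \<in> carrier_vec k" by (simp add: x_def)
    ultimately have Axe: "A *\<^sub>v x = act n \<theta> L (vec n g)" using Ax[OF xc] by simp
    have "dim_col A = k" using A by simp
    then have "A *\<^sub>v x \<in> V" unfolding V_def col_def using xc by blast
    moreover have "f = fvn n (A *\<^sub>v x)" using Axe Phi_act g by simp
    ultimately have "A *\<^sub>v x \<in> V" "f = fvn n (A *\<^sub>v x)" by auto
    then show "f \<in> W" unfolding W_def by blast
  qed
  have Wsub: "FV.subspace W" unfolding WPhi by (rule module_hom.subspace_image[OF Phi_hom subspace_Eb])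
  have WEb: "W \<subseteq> Eb n" unfolding W_def using fvn_Eb by blast
  have Vcar: "V \<subseteq> carrier_vec n" unfolding V_def col_def using A by auto
  have Phi_inj: "inj_on \<Phi> (Eb k)"
  proof (rule inj_onI)
    fix f g assume fg: "f \<in> Eb k" "g \<in> Eb k" "\<Phi> f = \<Phi> g"
    then have "fvn n (act n \<theta> L (vec n f)) = fvn n (act n \<theta> L (vec n g))" using Phi_act by simp
    then have "act n \<theta> L (vec n f) = act n \<theta> L (vec n g)"
      by (rule inj_onD[OF fvn_inj _ act_carrier[OF vec_carrier] act_carrier[OF vec_carrier]])
    then have e: "vec n f = vec n g" by (rule inj_onD[OF act_inj[OF Lok] _ vec_carrier vec_carrier])
    show "f = g"
    proof
      fix i show "f i = g i"
      proof (cases "i < n")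
        case True
        have "vec n f $ i = vec n g $ i" using e by simp
        then show ?thesis using True by simp
      next
        case False then show ?thesis using fg kn by (auto simp: Eb_def)
      qed
    qed
  qed
  define col where "col = (\<lambda>c. \<Phi> (dlt c))"
  have col_act: "col c = fvn n (act n \<theta> L (unit_vec n c))" if "c < n" for c
  proof -
    have "vec n (dlt c) = unit_vec n c" using that by (auto simp: dlt_def unit_vec_def)
    then show ?thesis unfolding col_def Phi_act by simp
  qed
  have dltEb: "dlt ` {..<m} \<subseteq> Eb k" if "m \<le> k" for m using that by (auto simp: dlt_def Eb_def)
  have col_ind: "FV.independent (col ` {..<m})" if "m \<le> k" for m
  proof -
    have "FV.span (dlt ` {..<m}) \<subseteq> Eb k" using FV.span_minimal[OF dltEb[OF that] subspace_Eb] .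
    then have "inj_on \<Phi> (FV.span (dlt ` {..<m}))" using inj_on_subset[OF Phi_inj] by blast
    then have "FV.independent (\<Phi> ` dlt ` {..<m})"
      using module_hom.independent_injective_image[OF Phi_hom dlt_indep] by blast
    then show ?thesis unfolding col_def image_image .
  qed
  have col_card: "card (col ` {..<m}) = m" if "m \<le> k" for m
  proof -
    have "inj_on col {..<m}"
    proof (rule inj_onI)
      fix a b assume ab: "a \<in> {..<m}" "b \<in> {..<m}" "col a = col b"
      have "dlt a \<in> Eb k" "dlt b \<in> Eb k" using dltEb[OF that] ab by auto
      then have "dlt a = dlt b" using ab(3) inj_onD[OF Phi_inj] unfolding col_def by blast
      then show "a = b" using dlt_inj by (simp add: inj_eq)
    qed
    then show ?thesis by (simp add: card_image)
  qed
  have colW: "col ` {..<m} \<subseteq> W" if "m \<le> k" for m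
    unfolding WPhi col_def using dltEb[OF that] by blast
  have W_span: "W \<subseteq> FV.span (col ` {..<k})"
  proof -
    have "W \<subseteq> \<Phi> ` FV.span (dlt ` {..<k})" unfolding WPhi using Eb_span_dlt by blast
    also have "\<dots> = FV.span (col ` {..<k})"
      unfolding col_def image_image[symmetric] using module_hom.span_image[OF Phi_hom] by metis
    finally show ?thesis .
  qed
  define TT where "TT = topset W"
  define T where "T = Suc ` TT"
  have TTsub: "TT \<subseteq> {..<n}" unfolding TT_def by (rule topset_sub[OF WEb])
  have cTT: "card TT = k"
    unfolding TT_def using card_topset[OF Wsub WEb col_ind[OF order_refl] _ colW[OF order_refl] W_span] col_card
    by simp
  have cT: "card T = k" unfolding T_def using cTT by (simp add: card_image)
  have finT: "finite T" unfolding T_def using TTsub finite_subset by blast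
  have Tsub: "T \<subseteq> {1..n}" unfolding T_def using TTsub by auto
  have Tin: "T \<in> subsets_nk n k" using Tsub cT by (simp add: subsets_nk_def)
  have T0: "0 \<notin> T" unfolding T_def by auto
  have TTeq: "{r. Suc r \<in> T} = TT" unfolding T_def by auto
  have cardT: "card {x\<in>T. x \<le> m} = card {r\<in>TT. r < m}" for m
    using card_Suc_shift[OF T0, of m] TTeq by simp
  have injU: "inj_on (projF {r. Suc r \<in> T'}) W" if "V \<in> U k n T'" for T'
  proof (rule inj_onI)
    fix f g assume fg: "f \<in> W" "g \<in> W" "projF {r. Suc r \<in> T'} f = projF {r. Suc r \<in> T'} g"
    then obtain v w where vw: "v \<in> V" "w \<in> V" "f = fvn n v" "g = fvn n w" unfolding W_def by blast
    have vc: "v \<in> carrier_vec n" "w \<in> carrier_vec n" using vw Vcar by auto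
    have "fvn n (proj n T' v) = fvn n (proj n T' w)"
      using fg(3) vw fvn_proj[OF vc(1)] fvn_proj[OF vc(2)] by simp
    then have "proj n T' v = proj n T' w"
      by (rule inj_onD[OF fvn_inj]) (simp_all add: proj_def)
    then have "v = w" using that vw unfolding U_def bij_betw_def by (auto dest: inj_onD)
    then show "f = g" using vw by simp
  qed
  have VU: "V \<in> U k n T"
  proof -
    have inj: "inj_on (proj n T) V"
    proof (rule inj_onI)
      fix v w assume vw: "v \<in> V" "w \<in> V" "proj n T v = proj n T w"
      have vc: "v \<in> carrier_vec n" "w \<in> carrier_vec n" using vw Vcar by auto
      have "projF TT (fvn n v) = projF TT (fvn n w)" using fvn_proj[OF vc(1), of T] fvn_proj[OF vc(2), of T] vw(3) TTeq by simp
      then have "fvn n v = fvn n w" using projF_inj[OF Wsub WEb] vw unfolding TT_def W_def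
        by (auto dest: inj_onD)
      then show "v = w" by (rule inj_onD[OF fvn_inj _ vc])
    qed
    have "proj n T ` V = coord_space n T"
    proof (intro equalityI subsetI)
      fix u assume "u \<in> proj n T ` V"
      then show "u \<in> coord_space n T" by (auto simp: proj_def coord_space_def)
    next
      fix u assume u: "u \<in> coord_space n T"
      then have uc: "u \<in> carrier_vec n" by (simp add: coord_space_def)
      have "fvn n u \<in> Eb n" by (rule fvn_Eb)
      moreover have "\<forall>i. i \<notin> topset W \<longrightarrow> fvn n u i = 0"
        using u unfolding coord_space_def fvn_def TT_def[symmetric] T_def by auto
      ultimately obtain f where f: "f \<in> W" "fvn n u = projF TT f"
        using projF_surj[OF Wsub WEb] unfolding TT_def by blast
      then obtain v where v: "v \<in> V" "f = fvn n v" unfolding W_def by blast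
      have "fvn n (proj n T v) = fvn n u" using fvn_proj[of v n T] v f Vcar TTeq by auto
      then have "proj n T v = u" by (rule inj_onD[OF fvn_inj]) (simp_all add: proj_def uc)
      then show "u \<in> proj n T ` V" using v by blast
    qed
    then show ?thesis unfolding U_def using VGr inj by (simp add: bij_betw_def)
  qed
  have maxT: "gale_le k T' T" if T': "T' \<in> subsets_nk n k" "V \<in> U k n T'" for T'
  proof -
    have T'sub: "T' \<subseteq> {1..n}" and cT': "card T' = k" using T' by (auto simp: subsets_nk_def)
    have finT': "finite T'" using T'sub finite_subset by blast
    have T'0: "0 \<notin> T'" using T'sub by auto
    have cc: "card {r\<in>TT. r < m} \<le> card {r\<in>{r. Suc r \<in> T'}. r < m}" for m
      unfolding TT_def by (rule compare_count[OF Wsub WEb injU[OF T'(2)]])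
    show ?thesis unfolding gale_le_def
    proof
      fix i assume i: "i \<in> {1..k}"
      have "i \<le> card {x\<in>T. x \<le> elt T i}" using elt_crit[OF finT, of i "elt T i"] i cT by simp
      also have "\<dots> = card {r\<in>TT. r < elt T i}" by (rule cardT)
      also have "\<dots> \<le> card {r\<in>{r. Suc r \<in> T'}. r < elt T i}" by (rule cc)
      also have "\<dots> = card {x\<in>T'. x \<le> elt T i}" using card_Suc_shift[OF T'0] by simp
      finally show "elt T' i \<le> elt T i" using elt_crit[OF finT', of i "elt T i"] i cT' by simp
    qed
  qed
  have col_Eb: "col c \<in> Eb (elt S (Suc c))" if "c < k" for c
  proof -
    have "act n \<theta> L (unit_vec n c) \<in> Ev n (elt S (Suc c))"
      using col_supp(1)[OF finS Ssub cS _ _ kn, of "Suc c" \<theta>] that L_def by simp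
    then show ?thesis using col_act[of c] that kn fvn_Ev by simp
  qed
  have elt_bound: "elt T i \<le> m" if i: "1 \<le> i" "i \<le> k" and Ei: "col ` {..<i} \<subseteq> Eb m" for i m
  proof -
    have "finite (col ` {..<i}) \<and> card (col ` {..<i}) \<le> card {r\<in>topset W. r < m}"
      using card_bound[OF Wsub WEb col_ind[of i] colW[of i] Ei] i by simp
    then have "i \<le> card {x\<in>T. x \<le> m}" using col_card[of i] i cardT TT_def by simp
    then show ?thesis using elt_crit[OF finT i(1)] i cT by simp
  qed
  have TleS: "gale_le k T S" unfolding gale_le_def
  proof
    fix i assume i: "i \<in> {1..k}"
    have "col ` {..<i} \<subseteq> Eb (elt S i)"
    proof
      fix f assume "f \<in> col ` {..<i}"
      then obtain c where c: "c < i" "f = col c" by blast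
      have "col c \<in> Eb (elt S (Suc c))" using col_Eb c i by simp
      moreover have "elt S (Suc c) \<le> elt S i"
        using elt_less[OF finS, of "Suc c" i] c i cS by (cases "Suc c = i") auto
      ultimately show "f \<in> Eb (elt S i)" using c by (auto simp: Eb_def)
    qed
    then show "elt T i \<le> elt S i" using elt_bound i by simp
  qed
  obtain c j0 where z: "(c, j0) \<in> Z k S" "\<theta> (c, j0) \<notin> {0<..<pi}" using assms(5) by auto
  have zc: "1 \<le> c" "c \<le> k" "c \<le> j0" "j0 \<le> elt S c - 1" using z(1) by (auto simp: Z_def)
  have "\<theta> (c, j0) = 0 \<or> \<theta> (c, j0) = pi" using z assms(4) by force
  then have sin0: "sin (\<theta> (c, j0)) = 0" by auto
  have ceS: "c \<le> elt S c" using elt_ge[OF finS Ssub zc(1)] zc cS by simp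
  have j0l: "j0 < elt S c" using zc ceS by linarith
  have "col ` {..<c} \<subseteq> Eb (elt S c - 1)"
  proof
    fix f assume "f \<in> col ` {..<c}"
    then obtain c' where c': "c' < c" "f = col c'" by blast
    show "f \<in> Eb (elt S c - 1)"
    proof (cases "Suc c' = c")
      case True
      have "act n \<theta> L (unit_vec n (c - 1)) \<in> Ev n (elt S c - 1)"
        using col_supp(2)[where \<theta>=\<theta>, OF finS Ssub cS zc(1) zc(2) kn zc(3) j0l sin0] L_def by simp
      moreover have "c - Suc 0 = c'" using True by simp
      ultimately have "act n \<theta> L (unit_vec n c') \<in> Ev n (elt S c - 1)" using L_def by simp
      then show ?thesis using col_act[of c'] c' zc kn fvn_Ev by simp
    next
      case False
      then have "elt S (Suc c') < elt S c" using elt_less[OF finS, of "Suc c'" c] c' zc cS by simp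
      then show ?thesis using col_Eb[of c'] c' zc by (auto simp: Eb_def)
    qed
  qed
  then have "elt T c \<le> elt S c - 1" using elt_bound zc by simp
  then have "T \<noteq> S" using ceS zc by auto
  then have "gale_less k T S" using TleS by (simp add: gale_less_def)
  moreover have "V \<in> schubert_cell k n T"
    unfolding schubert_cell_def using VGr Tin VU maxT by blast
  ultimately show ?thesis using RotV Tin by blast
qed

end
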